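(* Let $P$ be a basic program. (1) Every answer set by complement of $P$ is a minimal model of $P$. (2) If $P$ is naf-monotone, every answer set by reduct of $P$ is a minimal model of $P$. (3) Every answer set of $P$ (by complement or by reduct) supports each of its members; i.e., for every such answer set $M$ and every $a\in M$, $M$ supports $a$.
   Context: Fix a countable set $\mathcal{A}$ of atoms. A c-atom is $A=(A_d,A_c)$, $A_d\subseteq\mathcal{A}$, $A_c\subseteq 2^{A_d}$; $(\{p\},\{\{p\}\})$ is elementary; $\bot=(\mathcal{A},\emptyset)$; $A$ is monotone if $X\subseteq Y\subseteq A_d$, $X\in A_c$ imply $Y\in A_c$. Rule: $A\leftarrow A_1,\dots,A_k,\mathit{not}\,A_{k+1},\dots,\mathit{not}\,A_n$, $head(r)=A$, $pos(r)=\{A_1,..,A_k\}$, $neg(r)=\{A_{k+1},..,A_n\}$. Program = set of rules; positive if no naf-literals; basic if every head is elementary or $\bot$; naf-monotone if every c-atom in some $neg(r)$ is monotone. $S\models A$ iff $S\cap A_d\in A_c$; $S\models\mathit{not}\,A$ iff $S\cap A_d\notin A_c$; $S\models body(r)$ if it satisfies all body literals; a rule is satisfied if head satisfied or body not; model = satisfies all rules; minimal model = model with no proper subset a model. $S$ supports atom $a$ w.r.t. $P$ if some $r\in P$ and $X\in head(r)_c$ satisfy $S\models body(r)$, $X\subseteq S$, $a\in X$. Conditional satisfaction: $S\models_M A$ iff $S\models A$ and every $I$ with $S\cap A_d\subseteq I\subseteq M\cap A_d$ lies in $A_c$. For positive basic $P$: $T_P(S,M)=\{a\mid \exists r\in P,\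 head(r)=(\{a\},\{\{a\}\}),\ S\models_M B\ \forall B\in pos(r)\}$, $T^0_P(\emptyset,M)=\emptyset$, $T^{i+1}_P(\emptyset,M)=T_P(T^i_P(\emptyset,M),M)$, $T^\infty_P(\emptyset,M)=\bigcup_i T^i_P(\emptyset,M)$; a model $M$ is an answer set iff $M=T^\infty_P(\emptyset,M)$. Complement $\bar A=(A_d,2^{A_d}\setminus A_c)$; $\mathcal{C}(P)$ replaces each $\mathit{not}\,A$ by $\bar A$; answer set by complement = answer set of $\mathcal{C}(P)$. Reduct $P^M$: delete rules with some $\mathit{not}\,A$ in the body where $M\models A$, then delete remaining naf-literals; answer set by reduct = answer set of $P^M$. *)

theory Defs
  imports Main "HOL-Library.Countable"
begin

text \<open>Atoms are the elements of a countable type 'a; the atom set is UNIV.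
A c-atom is a pair (A_d, A_c).\<close>

type_synonym 'a catom = "'a set \<times> 'a set set"

definition wf_catom :: "'a catom \<Rightarrow> bool" where
  "wf_catom A \<longleftrightarrow> snd A \<subseteq> Pow (fst A)"

definition elem_catom :: "'a \<Rightarrow> 'a catom" where
  "elem_catom p = ({p}, {{p}})"

definition bot_catom :: "'a catom" where
  "bot_catom = (UNIV, {})"

definition monotone_catom :: "'a catom \<Rightarrow> bool" where
  "monotone_catom A \<longleftrightarrow> (\<forall>X Y. X \<subseteq> Y \<and> Y \<subseteq> fst A \<and> X \<in> snd A \<longrightarrow> Y \<in> snd A)"

datatype 'a rule = Rule (head: "'a catom") (pos: "'a catom list") (neg: "'a catom list")

type_synonym 'a program = "'a rule set"

definition wf_program :: "'a program \<Rightarrow> bool" where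
  "wf_program P \<longleftrightarrow> (\<forall>r\<in>P. wf_catom (head r) \<and> (\<forall>A\<in>set (pos r) \<union> set (neg r). wf_catom A))"

definition positive_prog :: "'a program \<Rightarrow> bool" where
  "positive_prog P \<longleftrightarrow> (\<forall>r\<in>P. neg r = [])"

definition basic_prog :: "'a program \<Rightarrow> bool" where
  "basic_prog P \<longleftrightarrow> (\<forall>r\<in>P. (\<exists>p. head r = elem_catom p) \<or> head r = bot_catom)"

definition naf_monotone :: "'a program \<Rightarrow> bool" where
  "naf_monotone P \<longleftrightarrow> (\<forall>r\<in>P. \<forall>A\<in>set (neg r). monotone_catom A)"

definition sat :: "'a set \<Rightarrow> 'a catom \<Rightarrow> bool" where
  "sat S A \<longleftrightarrow> S \<inter> fst A \<in> snd A"

definition sat_body :: "'a set \<Rightarrow> 'a rule \<Rightarrow> bool" where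
  "sat_body S r \<longleftrightarrow> (\<forall>A\<in>set (pos r). sat S A) \<and> (\<forall>A\<in>set (neg r). \<not> sat S A)"

definition sat_rule :: "'a set \<Rightarrow> 'a rule \<Rightarrow> bool" where
  "sat_rule S r \<longleftrightarrow> sat S (head r) \<or> \<not> sat_body S r"

definition is_model :: "'a program \<Rightarrow> 'a set \<Rightarrow> bool" where
  "is_model P S \<longleftrightarrow> (\<forall>r\<in>P. sat_rule S r)"

definition minimal_model :: "'a program \<Rightarrow> 'a set \<Rightarrow> bool" where
  "minimal_model P S \<longleftrightarrow> is_model P S \<and> (\<forall>S'. S' \<subset> S \<longrightarrow> \<not> is_model P S')"

definition supports :: "'a program \<Rightarrow> 'a set \<Rightarrow> 'a \<Rightarrow> bool" where
  "supports P S a \<longleftrightarrow> (\<exists>r\<in>P. \<exists>X\<in>snd (head r). sat_body S r \<and> X \<subseteq> S \<and> a \<in> X)"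

definition csat :: "'a set \<Rightarrow> 'a set \<Rightarrow> 'a catom \<Rightarrow> bool" where
  "csat S M A \<longleftrightarrow> sat S A \<and> (\<forall>I. S \<inter> fst A \<subseteq> I \<and> I \<subseteq> M \<inter> fst A \<longrightarrow> I \<in> snd A)"

definition TP :: "'a program \<Rightarrow> 'a set \<Rightarrow> 'a set \<Rightarrow> 'a set" where
  "TP P S M = {a. \<exists>r\<in>P. head r = elem_catom a \<and> (\<forall>B\<in>set (pos r). csat S M B)}"

primrec TP_iter :: "'a program \<Rightarrow> 'a set \<Rightarrow> nat \<Rightarrow> 'a set" where
  "TP_iter P M 0 = {}"
| "TP_iter P M (Suc n) = TP P (TP_iter P M n) M"

definition TP_inf :: "'a program \<Rightarrow> 'a set \<Rightarrow> 'a set" where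
  "TP_inf P M = (\<Union>n. TP_iter P M n)"

definition answer_set_pb :: "'a program \<Rightarrow> 'a set \<Rightarrow> bool" where
  "answer_set_pb P M \<longleftrightarrow> is_model P M \<and> M = TP_inf P M"

definition compl_catom :: "'a catom \<Rightarrow> 'a catom" where
  "compl_catom A = (fst A, Pow (fst A) - snd A)"

definition complement_prog :: "'a program \<Rightarrow> 'a program" where
  "complement_prog P = (\<lambda>r. Rule (head r) (pos r @ map compl_catom (neg r)) []) ` P"

definition reduct :: "'a program \<Rightarrow> 'a set \<Rightarrow> 'a program" where
  "reduct P M = (\<lambda>r. Rule (head r) (pos r) []) ` {r\<in>P. \<forall>A\<in>set (neg r). \<not> sat M A}"

definition answer_set_compl :: "'a program \<Rightarrow> 'a set \<Rightarrow> bool" where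
  "answer_set_compl P M \<longleftrightarrow> answer_set_pb (complement_prog P) M"

definition answer_set_reduct :: "'a program \<Rightarrow> 'a set \<Rightarrow> bool" where
  "answer_set_reduct P M \<longleftrightarrow> answer_set_pb (reduct P M) M"

end

theory Submission
  imports Defs
begin

lemma TP_red:
  assumes "a \<in> TP (reduct P M) T M"
  obtains r where "r \<in> P" "head r = elem_catom a" "\<forall>A\<in>set (neg r). \<not> sat M A"
      "\<forall>B\<in>set (pos r). csat T M B"
proof -
  from assms obtain r' where r': "r' \<in> reduct P M" "head r' = elem_catom a" "\<forall>B\<in>set (pos r'). csat T M B"
    unfolding TP_def by blast
  then obtain r where "r \<in> P" "\<forall>A\<in>set (neg r). \<not> sat M A" "r' = Rule (head r) (pos r) []"
    unfolding reduct_def by blast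
  thus ?thesis using that r' by simp
qed
lemma TP_compl:
  assumes "a \<in> TP (complement_prog P) T M"
  obtains r where "r \<in> P" "head r = elem_catom a"
      "\<forall>B\<in>set (pos r @ map compl_catom (neg r)). csat T M B"
proof -
  from assms obtain r' where r': "r' \<in> complement_prog P" "head r' = elem_catom a" "\<forall>B\<in>set (pos r'). csat T M B"
    unfolding TP_def by blast
  then obtain r where "r \<in> P" "r' = Rule (head r) (pos r @ map compl_catom (neg r)) []"
    unfolding complement_prog_def by blast
  thus ?thesis using that r' by simp
qed

lemma sat_compl: "sat S (compl_catom A) \<longleftrightarrow> \<not> sat S A"
  by (auto simp: sat_def compl_catom_def)

lemma body_compl:
  assumes "\<forall>B\<in>set (pos r @ map compl_catom (neg r)). sat S B"
  shows "sat_body S r"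
  unfolding sat_body_def
proof (intro conjI ballI)
  fix A assume "A \<in> set (pos r)" thus "sat S A" using assms by simp
next
  fix A assume "A \<in> set (neg r)"
  hence "compl_catom A \<in> set (pos r @ map compl_catom (neg r))" by simp
  hence "sat S (compl_catom A)" using assms by blast
  thus "\<not> sat S A" by (simp add: sat_compl)
qed

lemma csat_sat: "T \<subseteq> S \<Longrightarrow> S \<subseteq> M \<Longrightarrow> csat T M B \<Longrightarrow> sat S B"
  unfolding csat_def sat_def
  apply (elim conjE)
  apply (drule spec[where x="S \<inter> fst B"])
  by blast

lemma iter_sub: "M = TP_inf Q M \<Longrightarrow> TP_iter Q M n \<subseteq> M"
  unfolding TP_inf_def by blast

lemma sat_elem: "sat S (elem_catom a) \<longleftrightarrow> a \<in> S"
  by (auto simp: sat_def elem_catom_def)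

lemma compl_min:
  assumes M: "M = TP_inf (complement_prog P) M" and S: "S \<subseteq> M" "is_model P S"
  shows "TP_iter (complement_prog P) M n \<subseteq> S"
proof (induction n)
  case 0 then show ?case by simp
next
  case (Suc n)
  show ?case
  proof
    fix a assume "a \<in> TP_iter (complement_prog P) M (Suc n)"
    then obtain r where r: "r \<in> P" "head r = elem_catom a"
      and c: "\<forall>B\<in>set (pos r @ map compl_catom (neg r)). csat (TP_iter (complement_prog P) M n) M B"
      by (auto elim: TP_compl)
    have "\<forall>B\<in>set (pos r @ map compl_catom (neg r)). sat S B"
      using c csat_sat[OF Suc S(1)] by blast
    hence "sat_body S r" by (rule body_compl)
    with S(2) r show "a \<in> S" by (auto simp: is_model_def sat_rule_def sat_elem)
  qed
qed

lemma red_min: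
  assumes M: "M = TP_inf (reduct P M) M" and S: "S \<subseteq> M" "is_model P S"
    and nm: "naf_monotone P"
  shows "TP_iter (reduct P M) M n \<subseteq> S"
proof (induction n)
  case 0 then show ?case by simp
next
  case (Suc n)
  show ?case
  proof
    fix a assume "a \<in> TP_iter (reduct P M) M (Suc n)"
    then obtain r where r: "r \<in> P" "head r = elem_catom a" "\<forall>A\<in>set (neg r). \<not> sat M A"
      and c: "\<forall>B\<in>set (pos r). csat (TP_iter (reduct P M) M n) M B"
      by (auto elim: TP_red)
    have "\<forall>B\<in>set (pos r). sat S B"
      using c csat_sat[OF Suc S(1)] by blast
    moreover have "\<forall>A\<in>set (neg r). \<not> sat S A"
    proof
      fix A assume A: "A \<in> set (neg r)"
      have "monotone_catom A" using nm r(1) A unfolding naf_monotone_def by blast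
      show "\<not> sat S A"
      proof
        assume "sat S A"
        hence "S \<inter> fst A \<in> snd A" by (simp add: sat_def)
        moreover have "S \<inter> fst A \<subseteq> M \<inter> fst A" using S(1) by blast
        ultimately have "M \<inter> fst A \<in> snd A"
          using \<open>monotone_catom A\<close> unfolding monotone_catom_def by blast
        hence "sat M A" by (simp add: sat_def)
        thus False using r(3) A by blast
      qed
    qed
    ultimately have "sat_body S r" by (auto simp: sat_body_def)
    with S(2) r show "a \<in> S" by (auto simp: is_model_def sat_rule_def sat_elem)
  qed
qed

theorem proposition4:
  fixes P :: "('a::countable) program"
  assumes "wf_program P" and "basic_prog P"
  shows "(\<forall>M. answer_set_compl P M \<longrightarrow> minimal_model P M)
    \<and> (naf_monotone P \<longrightarrow> (\<forall>M. answer_set_reduct P M \<longrightarrow> minimal_model P M))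
    \<and> (\<forall>M. (answer_set_compl P M \<or> answer_set_reduct P M) \<longrightarrow> (\<forall>a\<in>M. supports P M a))"
proof (intro conjI allI impI ballI)
  fix M assume a: "answer_set_compl P M"
  hence m: "is_model (complement_prog P) M" "M = TP_inf (complement_prog P) M"
    by (auto simp: answer_set_compl_def answer_set_pb_def)
  have mod: "is_model P M"
    unfolding is_model_def
  proof
    fix r assume "r \<in> P"
    hence "sat_rule M (Rule (head r) (pos r @ map compl_catom (neg r)) [])"
      using m(1) by (auto simp: is_model_def complement_prog_def)
    thus "sat_rule M r" by (auto simp: sat_rule_def sat_body_def sat_compl)
  qed
  show "minimal_model P M"
    unfolding minimal_model_def
  proof (intro conjI allI impI mod notI)
    fix S assume "S \<subset> M" "is_model P S"
    hence "\<forall>n. TP_iter (complement_prog P) M n \<subseteq> S" using compl_min[OF m(2)] by blast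
    hence "M \<subseteq> S" using m(2) unfolding TP_inf_def by blast
    with \<open>S \<subset> M\<close> show False by blast
  qed
next
  fix M assume nm: "naf_monotone P" and a: "answer_set_reduct P M"
  hence m: "is_model (reduct P M) M" "M = TP_inf (reduct P M) M"
    by (auto simp: answer_set_reduct_def answer_set_pb_def)
  have mod: "is_model P M"
    unfolding is_model_def
  proof
    fix r assume r: "r \<in> P"
    show "sat_rule M r"
    proof (cases "\<forall>A\<in>set (neg r). \<not> sat M A")
      case True
      hence "sat_rule M (Rule (head r) (pos r) [])"
        using m(1) r by (auto simp: is_model_def reduct_def)
      thus ?thesis using True by (auto simp: sat_rule_def sat_body_def)
    next
      case False thus ?thesis by (auto simp: sat_rule_def sat_body_def)
    qed
  qed
  show "minimal_model P M"
    unfolding minimal_model_def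
  proof (intro conjI allI impI mod notI)
    fix S assume "S \<subset> M" "is_model P S"
    hence "\<forall>n. TP_iter (reduct P M) M n \<subseteq> S" using red_min[OF m(2) _ _ nm] by blast
    hence "M \<subseteq> S" using m(2) unfolding TP_inf_def by blast
    with \<open>S \<subset> M\<close> show False by blast
  qed
next
  fix M a assume as: "answer_set_compl P M \<or> answer_set_reduct P M" and aM: "a \<in> M"
  show "supports P M a"
  proof (cases "answer_set_compl P M")
    case True
    hence m: "M = TP_inf (complement_prog P) M"
      by (auto simp: answer_set_compl_def answer_set_pb_def)
    then obtain n where "a \<in> TP_iter (complement_prog P) M n" using aM
      by (metis TP_inf_def UN_iff)
    then obtain k where "a \<in> TP_iter (complement_prog P) M (Suc k)"
      by (cases n) auto
    then obtain r where r: "r \<in> P" "head r = elem_catom a"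
      and c: "\<forall>B\<in>set (pos r @ map compl_catom (neg r)). csat (TP_iter (complement_prog P) M k) M B"
      by (auto elim: TP_compl)
    have "\<forall>B\<in>set (pos r @ map compl_catom (neg r)). sat M B"
      using c csat_sat[OF iter_sub[OF m]] by blast
    hence "sat_body M r" by (rule body_compl)
    thus ?thesis using r aM unfolding supports_def by (auto simp: elem_catom_def)
  next
    case False
    hence "answer_set_reduct P M" using as by blast
    hence m: "M = TP_inf (reduct P M) M"
      by (auto simp: answer_set_reduct_def answer_set_pb_def)
    then obtain n where "a \<in> TP_iter (reduct P M) M n" using aM
      by (metis TP_inf_def UN_iff)
    then obtain k where "a \<in> TP_iter (reduct P M) M (Suc k)"
      by (cases n) auto
    then obtain r where r: "r \<in> P" "head r = elem_catom a" "\<forall>A\<in>set (neg r). \<not> sat M A"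
      and c: "\<forall>B\<in>set (pos r). csat (TP_iter (reduct P M) M k) M B"
      by (auto elim: TP_red)
    have "\<forall>B\<in>set (pos r). sat M B"
      using c csat_sat[OF iter_sub[OF m]] by blast
    hence "sat_body M r" using r(3) by (auto simp: sat_body_def)
    thus ?thesis using r aM unfolding supports_def by (auto simp: elem_catom_def)
  qed
qed

end
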